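(* Let $(X,T)$ be a topological dynamical system and $\mathscr U$ an open cover of $X$. Let $\lambda_c$ be a symmetric probability measure on $[0,1]$ and let $c_S^n=\int_{[0,1]}x^{|S|}(1-x)^{n-|S|}\lambda_c(dx)$ for $S\subset n^*$. Define $b_n=\sum_{S\subset n^*}c_S^n\log N(\mathscr U_S)$. Then $b_{n+m}\le b_n+b_m$ for all $n,m\in\mathbb N$.
   Context: $(X,T)$: compact Hausdorff space with continuous map. $n^*=\{0,\dots,n-1\}$; $\mathscr U_S=\bigvee_{i\in S}T^{-i}\mathscr U$ (with $\mathscr U_\emptyset=\{X\}$); $N(\cdot)$ minimal cardinality of a subcover. A probability measure $\lambda$ on $[0,1]$ is symmetric if $\int f(x)\lambda(dx)=\int f(1-x)\lambda(dx)$ for all bounded measurable $f$. *)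

theory Defs
  imports "HOL-Probability.Probability"
begin

text \<open>Join cover U_S = join over i in S of T^{-i} U; for S = {} this is {UNIV}.\<close>
definition join_cover :: "('a \<Rightarrow> 'a) \<Rightarrow> 'a set set \<Rightarrow> nat set \<Rightarrow> 'a set set" where
  "join_cover T U S = {(\<Inter>i\<in>S. (T ^^ i) -` (V i)) | V. \<forall>i\<in>S. V i \<in> U}"

definition N_cov :: "'a set set \<Rightarrow> nat" where
  "N_cov C = (LEAST k. \<exists>F. F \<subseteq> C \<and> finite F \<and> card F = k \<and> \<Union>F = UNIV)"

text \<open>Symmetric probability measure on [0,1], represented as a Borel probability
measure on the reals concentrated on [0,1].\<close>
definition symmetric_prob_01 :: "real measure \<Rightarrow> bool" where
  "symmetric_prob_01 lam \<longleftrightarrow> prob_space lam \<and> sets lam = sets borel \<and>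
     emeasure lam {0..1} = 1 \<and>
     (\<forall>f :: real \<Rightarrow> real. f \<in> borel_measurable borel \<longrightarrow> bounded (range f) \<longrightarrow>
        (\<integral>x. f x \<partial>lam) = (\<integral>x. f (1 - x) \<partial>lam))"

definition c_coef :: "real measure \<Rightarrow> nat \<Rightarrow> nat set \<Rightarrow> real" where
  "c_coef lam n S = (\<integral>x. x ^ card S * (1 - x) ^ (n - card S) \<partial>lam)"

definition b_seq :: "real measure \<Rightarrow> ('a \<Rightarrow> 'a) \<Rightarrow> 'a set set \<Rightarrow> nat \<Rightarrow> real" where
  "b_seq lam T U n = (\<Sum>S\<in>Pow {..<n}. c_coef lam n S * ln (real (N_cov (join_cover T U S))))"

end

theory Submission
  imports Defs
begin

lemma join_cover_memE:
  assumes "c \<in> join_cover T U S"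
  obtains V where "c = (\<Inter>i\<in>S. (T ^^ i) -` (V i))" "\<forall>i\<in>S. V i \<in> U"
  using assms unfolding join_cover_def mem_Collect_eq by metis

lemma join_cover_memI:
  assumes "\<forall>i\<in>S. V i \<in> U" "c = (\<Inter>i\<in>S. (T ^^ i) -` (V i))"
  shows "c \<in> join_cover T U S"
  using assms unfolding join_cover_def mem_Collect_eq by metis

lemma Ncov_ex:
  assumes "F \<subseteq> C" "finite F" "\<Union>F = UNIV"
  shows "\<exists>G. G \<subseteq> C \<and> finite G \<and> card G = N_cov C \<and> \<Union>G = UNIV"
proof -
  let ?P = "\<lambda>k. \<exists>F. F \<subseteq> C \<and> finite F \<and> card F = k \<and> \<Union>F = UNIV"
  have "?P (card F)" using assms by blast
  hence "?P (LEAST k. ?P k)" by (rule LeastI)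
  thus ?thesis unfolding N_cov_def .
qed

lemma Ncov_le:
  assumes "F \<subseteq> C" "finite F" "\<Union>F = UNIV"
  shows "N_cov C \<le> card F"
  unfolding N_cov_def by (rule Least_le) (use assms in blast)

lemma Ncov_pos:
  assumes "F \<subseteq> C" "finite F" "\<Union>F = UNIV"
  shows "N_cov C \<ge> 1"
proof -
  obtain G where G: "G \<subseteq> C" "finite G" "card G = N_cov C" "\<Union>G = UNIV"
    using Ncov_ex[OF assms] by blast
  have "G \<noteq> {}" using G(4) by auto
  hence "card G > 0" using G(2) by (simp add: card_gt_0_iff)
  thus ?thesis using G(3) by simp
qed

lemma cont_funpow:
  fixes T :: "'a::topological_space \<Rightarrow> 'a"
  assumes "continuous_on UNIV T"
  shows "continuous_on UNIV (T ^^ i)"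
proof (induction i)
  case 0 show ?case by simp
next
  case (Suc i)
  have "T ^^ Suc i = T \<circ> (T ^^ i)" by simp
  moreover have "continuous_on UNIV (T \<circ> (T ^^ i))"
    by (rule continuous_on_compose[OF Suc continuous_on_subset[OF assms]]) simp
  ultimately show ?case by simp
qed

lemma join_cover_cover:
  fixes T :: "'a::topological_space \<Rightarrow> 'a"
  assumes "compact (UNIV :: 'a set)" "continuous_on UNIV T"
    and "\<forall>u\<in>U. open u" and "\<Union>U = UNIV" and "finite S"
  shows "\<exists>F. F \<subseteq> join_cover T U S \<and> finite F \<and> \<Union>F = UNIV"
proof -
  have op: "open c" if cj: "c \<in> join_cover T U S" for c
  proof -
    obtain V where c: "c = (\<Inter>i\<in>S. (T ^^ i) -` (V i))" and V: "\<forall>i\<in>S. V i \<in> U"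
      using join_cover_memE[OF cj] by blast
    show ?thesis unfolding c
    proof (rule open_INT)
      show "finite S" by (rule assms(5))
      show "\<forall>i\<in>S. open ((T ^^ i) -` V i)"
      proof
        fix i assume "i \<in> S"
        hence "open (V i)" using V assms(3) by blast
        thus "open ((T ^^ i) -` V i)" by (rule open_vimage) (rule cont_funpow[OF assms(2)])
      qed
    qed
  qed
  have cov: "UNIV \<subseteq> \<Union>(join_cover T U S)"
  proof
    fix x :: 'a
    define V where "V = (\<lambda>i. SOME u. u \<in> U \<and> (T ^^ i) x \<in> u)"
    have V: "V i \<in> U \<and> (T ^^ i) x \<in> V i" for i
    proof -
      have "\<exists>u. u \<in> U \<and> (T ^^ i) x \<in> u" using assms(4) by blast
      thus ?thesis unfolding V_def by (rule someI_ex)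
    qed
    have "(\<Inter>i\<in>S. (T ^^ i) -` (V i)) \<in> join_cover T U S"
      using V by (intro join_cover_memI[of _ V]) auto
    moreover have "x \<in> (\<Inter>i\<in>S. (T ^^ i) -` (V i))" using V by auto
    ultimately show "x \<in> \<Union>(join_cover T U S)" by blast
  qed
  obtain F where "F \<subseteq> join_cover T U S" "finite F" "UNIV \<subseteq> \<Union>F"
    using compactE[OF assms(1) cov op] by blast
  thus ?thesis by blast
qed

lemma Ncov_union:
  assumes "S1 \<inter> S2 = {}"
    and F1: "F1 \<subseteq> join_cover T U S1" "finite F1" "\<Union>F1 = UNIV"
    and F2: "F2 \<subseteq> join_cover T U S2" "finite F2" "\<Union>F2 = UNIV"
  shows "N_cov (join_cover T U (S1 \<union> S2)) \<le> N_cov (join_cover T U S1) * N_cov (join_cover T U S2)"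
proof -
  obtain G1 where G1: "G1 \<subseteq> join_cover T U S1" "finite G1" "card G1 = N_cov (join_cover T U S1)" "\<Union>G1 = UNIV"
    using Ncov_ex[OF F1] by blast
  obtain G2 where G2: "G2 \<subseteq> join_cover T U S2" "finite G2" "card G2 = N_cov (join_cover T U S2)" "\<Union>G2 = UNIV"
    using Ncov_ex[OF F2] by blast
  define G where "G = (\<lambda>(a,b). a \<inter> b) ` (G1 \<times> G2)"
  have sub: "G \<subseteq> join_cover T U (S1 \<union> S2)"
  proof
    fix c assume "c \<in> G"
    then obtain a b where ab: "a \<in> G1" "b \<in> G2" "c = a \<inter> b" unfolding G_def by blast
    obtain V1 where a: "a = (\<Inter>i\<in>S1. (T ^^ i) -` (V1 i))" and V1: "\<forall>i\<in>S1. V1 i \<in> U"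
      using join_cover_memE[OF subsetD[OF G1(1) ab(1)]] by blast
    obtain V2 where b: "b = (\<Inter>i\<in>S2. (T ^^ i) -` (V2 i))" and V2: "\<forall>i\<in>S2. V2 i \<in> U"
      using join_cover_memE[OF subsetD[OF G2(1) ab(2)]] by blast
    define V where "V = (\<lambda>i. if i \<in> S1 then V1 i else V2 i)"
    have "c = (\<Inter>i\<in>S1 \<union> S2. (T ^^ i) -` (V i))"
    proof -
      have "(\<Inter>i\<in>S1. (T ^^ i) -` (V i)) = a" unfolding a V_def by auto
      moreover have "\<forall>i\<in>S2. V i = V2 i" using assms(1) unfolding V_def by auto
      hence "(\<Inter>i\<in>S2. (T ^^ i) -` (V i)) = b" unfolding b by simp
      ultimately show ?thesis using ab(3) by (simp add: INT_Un)
    qed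
    moreover have "\<forall>i\<in>S1 \<union> S2. V i \<in> U" using V1 V2 unfolding V_def by auto
    ultimately show "c \<in> join_cover T U (S1 \<union> S2)" by (intro join_cover_memI[of _ V])
  qed
  have fin: "finite G" unfolding G_def using G1 G2 by auto
  have cov: "\<Union>G = UNIV"
  proof -
    have "x \<in> \<Union>G" for x
    proof -
      obtain a where "a \<in> G1" "x \<in> a" using G1(4) by blast
      moreover obtain b where "b \<in> G2" "x \<in> b" using G2(4) by blast
      ultimately show ?thesis unfolding G_def by blast
    qed
    thus ?thesis by blast
  qed
  have "card G \<le> card (G1 \<times> G2)" unfolding G_def by (rule card_image_le) (use G1 G2 in auto)
  also have "\<dots> = card G1 * card G2" by (simp add: card_cartesian_product)
  finally show ?thesis using Ncov_le[OF sub fin cov] G1(3) G2(3) by simp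
qed

lemma Ncov_shift:
  assumes F: "F \<subseteq> join_cover T U S" "finite F" "\<Union>F = UNIV"
  shows "N_cov (join_cover T U ((\<lambda>i. i + n) ` S)) \<le> N_cov (join_cover T U S)"
proof -
  obtain G where G: "G \<subseteq> join_cover T U S" "finite G" "card G = N_cov (join_cover T U S)" "\<Union>G = UNIV"
    using Ncov_ex[OF F] by blast
  define H where "H = (\<lambda>a. (T ^^ n) -` a) ` G"
  have sub: "H \<subseteq> join_cover T U ((\<lambda>i. i + n) ` S)"
  proof
    fix c assume "c \<in> H"
    then obtain a where a: "a \<in> G" "c = (T ^^ n) -` a" unfolding H_def by blast
    obtain V where aV: "a = (\<Inter>i\<in>S. (T ^^ i) -` (V i))" and V: "\<forall>i\<in>S. V i \<in> U"
      using join_cover_memE[OF subsetD[OF G(1) a(1)]] by blast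
    define V' where "V' = (\<lambda>j. V (j - n))"
    have "c = (\<Inter>j\<in>(\<lambda>i. i + n) ` S. (T ^^ j) -` (V' j))"
      unfolding a(2) aV V'_def by (auto simp: funpow_add)
    moreover have "\<forall>j\<in>(\<lambda>i. i + n) ` S. V' j \<in> U" using V unfolding V'_def by auto
    ultimately show "c \<in> join_cover T U ((\<lambda>i. i + n) ` S)" by (intro join_cover_memI[of _ V'])
  qed
  have fin: "finite H" unfolding H_def using G by auto
  have cov: "\<Union>H = UNIV" unfolding H_def using G(4) by auto
  have "card H \<le> card G" unfolding H_def by (rule card_image_le) (use G in auto)
  thus ?thesis using Ncov_le[OF sub fin cov] G(3) by simp
qed


definition wt :: "nat \<Rightarrow> real \<Rightarrow> nat set \<Rightarrow> real" where
  "wt k x S = x ^ card S * (1 - x) ^ (k - card S)"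

lemma pow_split_sum:
  fixes n m :: nat
  shows "(\<Sum>S\<in>Pow {..<n+m}. h S) = (\<Sum>S1\<in>Pow {..<n}. \<Sum>S2\<in>Pow {..<m}. h (S1 \<union> (\<lambda>i. i + n) ` S2))"
proof -
  define f where "f = (\<lambda>(S1, S2). S1 \<union> (\<lambda>i. i + n) ` (S2::nat set))"
  define g where "g = (\<lambda>S::nat set. (S \<inter> {..<n}, (\<lambda>i. i - n) ` (S - {..<n})))"
  have bij: "bij_betw f (Pow {..<n} \<times> Pow {..<m}) (Pow {..<n+m})"
  proof (rule bij_betwI[where g=g])
    show "f \<in> Pow {..<n} \<times> Pow {..<m} \<rightarrow> Pow {..<n + m}" unfolding f_def by auto
    show "g \<in> Pow {..<n + m} \<rightarrow> Pow {..<n} \<times> Pow {..<m}" unfolding g_def by auto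
    show "g (f x) = x" if xA: "x \<in> Pow {..<n} \<times> Pow {..<m}" for x
    proof -
      obtain S1 S2 where x: "x = (S1, S2)" "S1 \<subseteq> {..<n}" "S2 \<subseteq> {..<m}" using xA by (cases x) auto
      have 1: "(S1 \<union> (\<lambda>i. i + n) ` S2) \<inter> {..<n} = S1" using x by auto
      have "(S1 \<union> (\<lambda>i. i + n) ` S2) - {..<n} = (\<lambda>i. i + n) ` S2" using x by auto
      hence 2: "(\<lambda>i. i - n) ` ((S1 \<union> (\<lambda>i. i + n) ` S2) - {..<n}) = S2" by (simp add: image_image)
      show ?thesis unfolding f_def g_def x using 1 2 by simp
    qed
    show "f (g y) = y" if "y \<in> Pow {..<n + m}" for y
    proof -
      have "(\<lambda>i. i + n) ` ((\<lambda>i. i - n) ` (y - {..<n})) = (\<lambda>i. i - n + n) ` (y - {..<n})"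
        by (simp add: image_image)
      also have "\<dots> = y - {..<n}" by (rule image_cong_simp[THEN trans, of _ _ _ id]) auto
      finally show ?thesis unfolding f_def g_def by auto
    qed
  qed
  have "(\<Sum>S\<in>Pow {..<n+m}. h S) = (\<Sum>x\<in>Pow {..<n} \<times> Pow {..<m}. h (f x))"
    using sum.reindex_bij_betw[OF bij, of h] by simp
  also have "\<dots> = (\<Sum>S1\<in>Pow {..<n}. \<Sum>S2\<in>Pow {..<m}. h (S1 \<union> (\<lambda>i. i + n) ` S2))"
    unfolding f_def sum.cartesian_product by (intro sum.cong refl) auto
  finally show ?thesis .
qed

lemma wt_split:
  assumes "S1 \<subseteq> {..<n}" "S2 \<subseteq> {..<m}"
  shows "wt (n+m) x (S1 \<union> (\<lambda>i. i + n) ` S2) = wt n x S1 * wt m x S2"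
proof -
  have f1: "finite S1" "finite S2" using assms finite_subset by auto
  have c2: "card ((\<lambda>i. i + n) ` S2) = card S2" by (rule card_image) (auto simp: inj_on_def)
  have d: "S1 \<inter> (\<lambda>i. i + n) ` S2 = {}" using assms by auto
  have c: "card (S1 \<union> (\<lambda>i. i + n) ` S2) = card S1 + card S2"
    using card_Un_disjoint[OF f1(1) _ d] f1 c2 by simp
  have l1: "card S1 \<le> n" using card_mono[OF _ assms(1)] by simp
  have l2: "card S2 \<le> m" using card_mono[OF _ assms(2)] by simp
  have e: "n + m - (card S1 + card S2) = (n - card S1) + (m - card S2)" using l1 l2 by simp
  show ?thesis unfolding wt_def c e by (simp add: power_add algebra_simps)
qed

lemma wt_sum: "(\<Sum>S\<in>Pow {..<k}. wt k x S) = 1"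
proof (induction k)
  case 0 then show ?case by (simp add: wt_def)
next
  case (Suc k)
  have p1: "Pow {..<Suc 0} = {{}, {0}}" by (auto simp: lessThan_Suc)
  have s1: "(\<Sum>S2\<in>Pow {..<1}. wt 1 x S2) = 1" by (simp add: p1 wt_def)
  have "(\<Sum>S\<in>Pow {..<Suc k}. wt (Suc k) x S) = (\<Sum>S\<in>Pow {..<k+1}. wt (k+1) x S)" by simp
  also have "\<dots> = (\<Sum>S1\<in>Pow {..<k}. \<Sum>S2\<in>Pow {..<1}. wt (k+1) x (S1 \<union> (\<lambda>i. i + k) ` S2))"
    by (rule pow_split_sum)
  also have "\<dots> = (\<Sum>S1\<in>Pow {..<k}. \<Sum>S2\<in>Pow {..<1}. wt k x S1 * wt 1 x S2)"
    by (intro sum.cong refl wt_split) auto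
  also have "\<dots> = (\<Sum>S1\<in>Pow {..<k}. wt k x S1 * (\<Sum>S2\<in>Pow {..<1}. wt 1 x S2))"
    by (simp add: sum_distrib_left)
  also have "\<dots> = 1" using Suc s1 by simp
  finally show ?case .
qed

lemma wt_nonneg: "0 \<le> x \<Longrightarrow> x \<le> 1 \<Longrightarrow> 0 \<le> wt k x S"
  unfolding wt_def by simp

lemma pointwise:
  assumes "0 \<le> x" "x \<le> 1"
    and L: "\<And>S1 S2. S1 \<subseteq> {..<n} \<Longrightarrow> S2 \<subseteq> {..<m} \<Longrightarrow> L (S1 \<union> (\<lambda>i. i + n) ` S2) \<le> L S1 + L S2"
  shows "(\<Sum>S\<in>Pow {..<n+m}. wt (n+m) x S * L S) \<le> (\<Sum>S\<in>Pow {..<n}. wt n x S * L S) + (\<Sum>S\<in>Pow {..<m}. wt m x S * L S)"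
proof -
  have "(\<Sum>S\<in>Pow {..<n+m}. wt (n+m) x S * L S) = (\<Sum>S1\<in>Pow {..<n}. \<Sum>S2\<in>Pow {..<m}. wt (n+m) x (S1 \<union> (\<lambda>i. i + n) ` S2) * L (S1 \<union> (\<lambda>i. i + n) ` S2))"
    by (rule pow_split_sum)
  also have "\<dots> = (\<Sum>S1\<in>Pow {..<n}. \<Sum>S2\<in>Pow {..<m}. (wt n x S1 * wt m x S2) * L (S1 \<union> (\<lambda>i. i + n) ` S2))"
    by (intro sum.cong refl) (simp add: wt_split)
  also have "\<dots> \<le> (\<Sum>S1\<in>Pow {..<n}. \<Sum>S2\<in>Pow {..<m}. (wt n x S1 * wt m x S2) * (L S1 + L S2))"
    by (intro sum_mono mult_left_mono L) (auto intro!: mult_nonneg_nonneg wt_nonneg assms)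
  also have "\<dots> = (\<Sum>S1\<in>Pow {..<n}. \<Sum>S2\<in>Pow {..<m}. (wt n x S1 * L S1) * wt m x S2)
      + (\<Sum>S1\<in>Pow {..<n}. \<Sum>S2\<in>Pow {..<m}. wt n x S1 * (wt m x S2 * L S2))"
    by (simp add: sum.distrib[symmetric] algebra_simps)
  also have "(\<Sum>S1\<in>Pow {..<n}. \<Sum>S2\<in>Pow {..<m}. (wt n x S1 * L S1) * wt m x S2) = (\<Sum>S\<in>Pow {..<n}. wt n x S * L S)"
    by (simp add: sum_distrib_left[symmetric] wt_sum)
  also have "(\<Sum>S1\<in>Pow {..<n}. \<Sum>S2\<in>Pow {..<m}. wt n x S1 * (wt m x S2 * L S2)) = (\<Sum>S\<in>Pow {..<m}. wt m x S * L S)"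
    by (simp add: sum_distrib_left[symmetric] sum_distrib_right[symmetric] wt_sum)
  finally show ?thesis .
qed


theorem theorem2p8:
  fixes T :: "'a::t2_space \<Rightarrow> 'a" and U :: "'a set set" and lam :: "real measure"
  assumes "compact (UNIV :: 'a set)"
    and "continuous_on UNIV T"
    and "\<forall>u\<in>U. open u" and "\<Union>U = UNIV"
    and "symmetric_prob_01 lam"
  shows "\<forall>n m. b_seq lam T U (n + m) \<le> b_seq lam T U n + b_seq lam T U m"
proof (intro allI)
  fix n m :: nat
  have pl: "prob_space lam" and sl: "sets lam = sets borel" and e01: "emeasure lam {0..1} = 1"
    using assms(5) unfolding symmetric_prob_01_def by auto
  interpret prob_space lam by (rule pl)
  have "measure lam {0..1} = 1" using e01 by (simp add: measure_def)
  hence AE01: "AE x in lam. x \<in> {0..1}" by (rule AE_prob_1)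
  have meas: "(\<lambda>x. wt k x S) \<in> borel_measurable lam" for k S
  proof -
    have "(\<lambda>x. wt k x S) \<in> borel_measurable borel" unfolding wt_def by measurable
    thus ?thesis by (simp add: measurable_cong_sets[OF sl refl])
  qed
  have int: "integrable lam (\<lambda>x. wt k x S)" for k S
  proof (rule integrable_const_bound[where B=1])
    show "AE x in lam. norm (wt k x S) \<le> 1"
      using AE01 by eventually_elim (auto simp: wt_def abs_mult power_abs intro!: mult_le_one power_le_one)
    show "(\<lambda>x. wt k x S) \<in> borel_measurable lam" by (rule meas)
  qed
  define L where "L S = ln (real (N_cov (join_cover T U S)))" for S
  define g where "g k x = (\<Sum>S\<in>Pow {..<k}. wt k x S * L S)" for k x
  have intg: "integrable lam (g k)" for k
    unfolding g_def by (intro Bochner_Integration.integrable_sum) (simp add: integrable_mult_left_iff int)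
  have bg: "b_seq lam T U k = integral\<^sup>L lam (g k)" for k
  proof -
    have "integral\<^sup>L lam (g k) = (\<Sum>S\<in>Pow {..<k}. integral\<^sup>L lam (\<lambda>x. wt k x S * L S))"
      unfolding g_def by (rule Bochner_Integration.integral_sum) (simp add: integrable_mult_left_iff int)
    also have "\<dots> = (\<Sum>S\<in>Pow {..<k}. integral\<^sup>L lam (\<lambda>x. wt k x S) * L S)" by simp
    also have "\<dots> = b_seq lam T U k" unfolding b_seq_def c_coef_def wt_def L_def ..
    finally show ?thesis by simp
  qed
  have cov: "\<exists>F. F \<subseteq> join_cover T U S \<and> finite F \<and> \<Union>F = UNIV" if "finite S" for S
    using join_cover_cover[OF assms(1-4) that] .
  have pos: "N_cov (join_cover T U S) \<ge> 1" if "finite S" for S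
    using cov[OF that] Ncov_pos by blast
  have Lsub: "L (S1 \<union> (\<lambda>i. i + n) ` S2) \<le> L S1 + L S2" if h: "S1 \<subseteq> {..<n}" "S2 \<subseteq> {..<m}" for S1 S2
  proof -
    have f: "finite S1" "finite S2" "finite ((\<lambda>i. i + n) ` S2)" "finite (S1 \<union> (\<lambda>i. i + n) ` S2)"
      using h finite_subset[OF h(1)] finite_subset[OF h(2)] by auto
    have d: "S1 \<inter> (\<lambda>i. i + n) ` S2 = {}" using h by auto
    obtain F1 where F1: "F1 \<subseteq> join_cover T U S1" "finite F1" "\<Union>F1 = UNIV" using cov[OF f(1)] by blast
    obtain F2 where F2: "F2 \<subseteq> join_cover T U S2" "finite F2" "\<Union>F2 = UNIV" using cov[OF f(2)] by blast
    obtain F3 where F3: "F3 \<subseteq> join_cover T U ((\<lambda>i. i + n) ` S2)" "finite F3" "\<Union>F3 = UNIV" using cov[OF f(3)] by blast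
    have 1: "N_cov (join_cover T U (S1 \<union> (\<lambda>i. i + n) ` S2)) \<le> N_cov (join_cover T U S1) * N_cov (join_cover T U ((\<lambda>i. i + n) ` S2))"
      by (rule Ncov_union[OF d F1 F3])
    have 2: "N_cov (join_cover T U ((\<lambda>i. i + n) ` S2)) \<le> N_cov (join_cover T U S2)"
      by (rule Ncov_shift[OF F2])
    have 3: "N_cov (join_cover T U (S1 \<union> (\<lambda>i. i + n) ` S2)) \<le> N_cov (join_cover T U S1) * N_cov (join_cover T U S2)"
      using 1 mult_le_mono2[OF 2] le_trans by blast
    hence 4: "real (N_cov (join_cover T U (S1 \<union> (\<lambda>i. i + n) ` S2))) \<le> real (N_cov (join_cover T U S1)) * real (N_cov (join_cover T U S2))"
      by (metis of_nat_mono of_nat_mult)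
    have p1: "real (N_cov (join_cover T U S1)) > 0" using pos[OF f(1)] by simp
    have p2: "real (N_cov (join_cover T U S2)) > 0" using pos[OF f(2)] by simp
    have p3: "real (N_cov (join_cover T U (S1 \<union> (\<lambda>i. i + n) ` S2))) > 0" using pos[OF f(4)] by simp
    have "L (S1 \<union> (\<lambda>i. i + n) ` S2) \<le> ln (real (N_cov (join_cover T U S1)) * real (N_cov (join_cover T U S2)))"
      unfolding L_def using 4 p1 p2 p3 by (subst ln_le_cancel_iff) auto
    also have "\<dots> = L S1 + L S2" unfolding L_def using p1 p2 by (simp add: ln_mult)
    finally show ?thesis .
  qed
  have "integral\<^sup>L lam (g (n + m)) \<le> integral\<^sup>L lam (\<lambda>x. g n x + g m x)"
  proof (rule integral_mono_AE)
    show "integrable lam (g (n + m))" by (rule intg)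
    show "integrable lam (\<lambda>x. g n x + g m x)" by (intro Bochner_Integration.integrable_add intg)
    show "AE x in lam. g (n + m) x \<le> g n x + g m x"
      using AE01
    proof eventually_elim
      case (elim x)
      show ?case unfolding g_def by (rule pointwise) (use elim Lsub in auto)
    qed
  qed
  also have "\<dots> = integral\<^sup>L lam (g n) + integral\<^sup>L lam (g m)"
    by (rule Bochner_Integration.integral_add) (rule intg)+
  finally show "b_seq lam T U (n + m) \<le> b_seq lam T U n + b_seq lam T U m" unfolding bg .
qed

end
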